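(* Let $n\ge 1$, $\tau>0$, and $\mathbf{s}=[s_1,\dots,s_n]^T\in\mathbb{R}^n$. Let $A_{\mathbf{s}}[i,j]=|s_i-s_j|$ and let $\mathbb{1}$ be the all-ones vector in $\mathbb{R}^n$. Define the matrix $\widehat{P}_{\mathrm{sort}(\mathbf{s})}(\tau)\in\mathbb{R}^{n\times n}$ row by row by $$\widehat{P}_{\mathrm{sort}(\mathbf{s})}[i,:](\tau)=\mathrm{softmax}\Big[\big((n+1-2i)\mathbf{s}-A_{\mathbf{s}}\mathbb{1}\big)/\tau\Big],\qquad i=1,\dots,n,$$ i.e. $\widehat{P}_{\mathrm{sort}(\mathbf{s})}[i,j](\tau)=\dfrac{\exp\big(((n+1-2i)s_j-\sum_{k}|s_j-s_k|)/\tau\big)}{\sum_{l}\exp\big(((n+1-2i)s_l-\sum_{k}|s_l-s_k|)/\tau\big)}$. Then: (1) (Unimodality) If the entries of $\mathbf{s}$ are pairwise distinct, then for every $\tau>0$, $\widehat{P}_{\mathrm{sort}(\mathbf{s})}(\tau)$ is a unimodal row stochastic matrix, and the vector $\mathbf{u}$ with $u_i=\arg\max_j\widehat{P}_{\mathrm{sort}(\mathbf{s})}[i,j](\tau)$ satisfies $\mathbf{u}=\mathrm{sort}(\mathbf{s})$. (2) (Limiting behavior) If the entries of $\mathbf{s}$ are drawn independently from a distribution on $\mathbb{R}$ that is absolutely continuous with respect to Lebesgue measure, then almost surely, for every $i\in\{1,\dots,n\}$, $$\lim_{\tau\to0^+}\widehat{P}_{\mathrm{sort}(\mathbf{s})}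[i,:](\tau)=P_{\mathrm{sort}(\mathbf{s})}[i,:].$$
   Context: For $\mathbf{s}\in\mathbb{R}^n$, $\mathrm{sort}(\mathbf{s})$ is the permutation $\mathbf{z}$ of $\{1,\dots,n\}$ listing indices in order of decreasing value of $s$ ($z_1$ is the index of the largest entry, etc.). The permutation matrix $P_{\mathbf{z}}$ has $P_{\mathbf{z}}[i,j]=1$ iff $j=z_i$ and $0$ otherwise. An $n\times n$ matrix $U$ is unimodal row stochastic if (i) $U[i,j]\ge0$ for all $i,j$; (ii) $\sum_j U[i,j]=1$ for all $i$; (iii) the vector $\mathbf{u}$ with $u_i=\arg\max_j U[i,j]$ (each row having a unique maximizer) is a permutation of $\{1,\dots,n\}$. *)

theory Defs
  imports "HOL-Probability.Probability"
begin

text \<open>Vectors in R^n and n x n matrices are represented as functions on the index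
  set {1..n} (values outside are irrelevant).\<close>

definition A_s :: "nat \<Rightarrow> (nat \<Rightarrow> real) \<Rightarrow> nat \<Rightarrow> nat \<Rightarrow> real" where
  "A_s n s i j = \<bar>s i - s j\<bar>"

definition soft_arg :: "nat \<Rightarrow> (nat \<Rightarrow> real) \<Rightarrow> real \<Rightarrow> nat \<Rightarrow> nat \<Rightarrow> real" where
  "soft_arg n s \<tau> i j =
     ((real n + 1 - 2 * real i) * s j - (\<Sum>k\<in>{1..n}. A_s n s j k)) / \<tau>"

definition softmax :: "nat \<Rightarrow> (nat \<Rightarrow> real) \<Rightarrow> nat \<Rightarrow> real" where
  "softmax n x j = exp (x j) / (\<Sum>l\<in>{1..n}. exp (x l))"

definition Phat :: "nat \<Rightarrow> (nat \<Rightarrow> real) \<Rightarrow> real \<Rightarrow> nat \<Rightarrow> nat \<Rightarrow> real" where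
  "Phat n s \<tau> i j = softmax n (soft_arg n s \<tau> i) j"

definition sort_perm :: "nat \<Rightarrow> (nat \<Rightarrow> real) \<Rightarrow> nat \<Rightarrow> nat" where
  "sort_perm n s = (SOME z. bij_betw z {1..n} {1..n} \<and>
      (\<forall>i\<in>{1..n}. \<forall>j\<in>{1..n}. i < j \<longrightarrow> s (z i) \<ge> s (z j)))"

definition perm_mat :: "(nat \<Rightarrow> nat) \<Rightarrow> nat \<Rightarrow> nat \<Rightarrow> real" where
  "perm_mat z i j = (if j = z i then 1 else 0)"

definition is_row_argmax :: "nat \<Rightarrow> (nat \<Rightarrow> nat \<Rightarrow> real) \<Rightarrow> nat \<Rightarrow> nat \<Rightarrow> bool" where
  "is_row_argmax n U i j \<longleftrightarrow> j \<in> {1..n} \<and> (\<forall>k\<in>{1..n}. k \<noteq> j \<longrightarrow> U i k < U i j)"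

definition row_argmax :: "nat \<Rightarrow> (nat \<Rightarrow> nat \<Rightarrow> real) \<Rightarrow> nat \<Rightarrow> nat" where
  "row_argmax n U i = (THE j. is_row_argmax n U i j)"

definition unimodal_row_stochastic :: "nat \<Rightarrow> (nat \<Rightarrow> nat \<Rightarrow> real) \<Rightarrow> bool" where
  "unimodal_row_stochastic n U \<longleftrightarrow>
     (\<forall>i\<in>{1..n}. \<forall>j\<in>{1..n}. U i j \<ge> 0) \<and>
     (\<forall>i\<in>{1..n}. (\<Sum>j\<in>{1..n}. U i j) = 1) \<and>
     (\<forall>i\<in>{1..n}. \<exists>j. is_row_argmax n U i j) \<and>
     bij_betw (row_argmax n U) {1..n} {1..n}"

end

theory Submission
  imports Defs
begin

definition FF :: "nat \<Rightarrow> (nat \<Rightarrow> real) \<Rightarrow> nat \<Rightarrow> nat \<Rightarrow> real" where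
  "FF n s r j = (real n + 1 - 2 * real r) * s j - (\<Sum>k\<in>{1..n}. \<bar>s j - s k\<bar>)"

lemma soft_arg_FF: "soft_arg n s \<tau> i j = FF n s i j / \<tau>"
  by (simp add: soft_arg_def FF_def A_s_def)

lemma key_ineq:
  fixes s :: "nat \<Rightarrow> real" and n :: nat
  assumes p: "p \<in> {1..n}" and j: "j \<in> {1..n}" and ne: "s j \<noteq> s p"
    and r: "card {k\<in>{1..n}. s p \<le> s k} = r"
  shows "FF n s r j < FF n s r p"
proof -
  let ?A = "{1..n::nat}"
  have "card {k\<in>?A. s p \<le> s k} \<le> card ?A" by (intro card_mono) auto
  then have rn: "r \<le> n" using r by simp
  have diff: "FF n s r p - FF n s r j = (real n + 1 - 2 * real r) * (s p - s j)
      - (\<Sum>k\<in>?A. \<bar>s p - s k\<bar> - \<bar>s j - s k\<bar>)"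
    by (simp add: FF_def sum_subtractf algebra_simps)
  show ?thesis
  proof (cases "s j < s p")
    case True
    define d where "d = s p - s j"
    have dpos: "d > 0" using True d_def by simp
    have "(\<Sum>k\<in>?A. \<bar>s p - s k\<bar> - \<bar>s j - s k\<bar>) \<le> (\<Sum>k\<in>?A. d - (if s p \<le> s k then 2*d else 0))"
      by (rule sum_mono) (auto simp: d_def)
    also have "\<dots> = real n * d - 2 * d * real r"
      using r by (simp add: sum_subtractf sum.inter_filter[symmetric])
    finally have "FF n s r p - FF n s r j \<ge> (real n + 1 - 2 * real r) * d - (real n * d - 2 * d * real r)"
      using diff d_def by simp
    moreover have "(real n + 1 - 2 * real r) * d - (real n * d - 2 * d * real r) = d"
      by (simp add: algebra_simps)
    ultimately show ?thesis using dpos by linarith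
  next
    case False
    with ne have lt: "s p < s j" by simp
    define d where "d = s j - s p"
    have dpos: "d > 0" using lt d_def by simp
    have cq: "card {k\<in>?A. s k < s p} = n - r"
    proof -
      have e: "{k\<in>?A. s k < s p} = ?A - {k\<in>?A. s p \<le> s k}" by auto
      have "card (?A - {k\<in>?A. s p \<le> s k}) = card ?A - card {k\<in>?A. s p \<le> s k}"
        by (rule card_Diff_subset) auto
      then show ?thesis using r e by simp
    qed
    have "(\<Sum>k\<in>?A. \<bar>s j - s k\<bar> - \<bar>s p - s k\<bar>) \<ge> (\<Sum>k\<in>?A. - d + (if s k < s p then 2*d else 0) + (if k = p then 2*d else 0))"
      by (rule sum_mono) (auto simp: d_def)
    also have "(\<Sum>k\<in>?A. - d + (if s k < s p then 2*d else 0) + (if k = p then 2*d else 0)) = - real n * d + 2 * d * real (n - r) + 2 * d"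
    proof -
      have "(\<Sum>k\<in>?A. - d + (if s k < s p then 2*d else 0) + (if k = p then 2*d else 0)) =
        (\<Sum>k\<in>?A. - d) + (\<Sum>k\<in>?A. if s k < s p then 2*d else 0) + (\<Sum>k\<in>?A. if k = p then 2*d else 0)"
        by (simp only: sum.distrib)
      also have "(\<Sum>k\<in>?A. if s k < s p then 2*d else 0) = real (n - r) * (2 * d)"
        using cq by (simp add: sum.inter_filter[symmetric])
      also have "(\<Sum>k\<in>?A. if k = p then 2*d else 0) = 2 * d"
        using p by simp
      finally show ?thesis by simp
    qed
    finally have "FF n s r p - FF n s r j \<ge> - (real n + 1 - 2 * real r) * d + (- real n * d + 2 * d * (real n - real r) + 2 * d)"
      using diff d_def rn by (simp add: sum_subtractf algebra_simps of_nat_diff)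
    moreover have "- (real n + 1 - 2 * real r) * d + (- real n * d + 2 * d * (real n - real r) + 2 * d) = d"
      by (simp add: algebra_simps)
    ultimately show ?thesis using dpos by linarith
  qed
qed

lemma AE_neq:
  fixes \<mu> :: "real measure"
  assumes P: "prob_space \<mu>" and S: "sets \<mu> = sets borel" and AC: "absolutely_continuous lborel \<mu>"
    and ij: "i \<in> I" "j \<in> I" "i \<noteq> j"
  shows "AE s in PiM I (\<lambda>_. \<mu>). s i \<noteq> s j"
proof -
  interpret pair_prob_space \<mu> \<mu>
    by (simp add: P pair_prob_space.intro pair_sigma_finite.intro prob_space_imp_sigma_finite)
  have pt: "AE y in \<mu>. x \<noteq> y" for x
    using absolutely_continuous_AE[OF _ AC AE_lborel_singleton[of x]] S by (auto simp: eq_commute)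
  have sp: "sets (\<mu> \<Otimes>\<^sub>M \<mu>) = sets (borel \<Otimes>\<^sub>M borel)"
    by (intro sets_pair_measure_cong S)
  have "{x\<in>space (\<mu> \<Otimes>\<^sub>M \<mu>). fst x \<noteq> snd x} \<in> sets (\<mu> \<Otimes>\<^sub>M \<mu>)"
  proof -
    have "{x\<in>space (borel \<Otimes>\<^sub>M borel). fst x \<noteq> snd x} \<in> sets (borel \<Otimes>\<^sub>M (borel :: real measure))"
      by measurable
    moreover have "space (\<mu> \<Otimes>\<^sub>M \<mu>) = space (borel \<Otimes>\<^sub>M (borel :: real measure))"
      using sets_eq_imp_space_eq[OF sp] .
    ultimately show ?thesis using sp by simp
  qed
  then have AE1: "AE p in \<mu> \<Otimes>\<^sub>M \<mu>. fst p \<noteq> snd p"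
    by (rule AE_pair_measure) (simp add: pt)
  have cb: "case_bool \<mu> \<mu> = (\<lambda>_. \<mu>)" by (auto split: bool.split)
  have AE2: "AE x in PiM UNIV (\<lambda>_::bool. \<mu>). x True \<noteq> x False"
  proof -
    have eq: "\<mu> \<Otimes>\<^sub>M \<mu> = distr (Pi\<^sub>M UNIV (\<lambda>_::bool. \<mu>)) (\<mu> \<Otimes>\<^sub>M \<mu>) (\<lambda>x. (x True, x False))"
      using pair_measure_eq_distr_PiM[of \<mu> \<mu>, unfolded cb] P prob_space_imp_sigma_finite by blast
    have "AE p in distr (Pi\<^sub>M UNIV (\<lambda>_::bool. \<mu>)) (\<mu> \<Otimes>\<^sub>M \<mu>) (\<lambda>x. (x True, x False)). fst p \<noteq> snd p"
      using AE1 by (simp only: eq[symmetric])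
    moreover have m: "(\<lambda>x. (x True, x False)) \<in> measurable (PiM UNIV (\<lambda>_::bool. \<mu>)) (\<mu> \<Otimes>\<^sub>M \<mu>)"
      by measurable
    ultimately show ?thesis
      using AE_distrD[OF m, of "\<lambda>p. fst p \<noteq> snd p"] by simp
  qed
  define f where "f = (\<lambda>b::bool. if b then i else j)"
  have eqd: "distr (Pi\<^sub>M I (\<lambda>_. \<mu>)) (\<Pi>\<^sub>M b\<in>UNIV. (\<lambda>_. \<mu>) (f b)) (\<lambda>\<omega>. \<lambda>b\<in>UNIV. \<omega> (f b)) = (\<Pi>\<^sub>M b\<in>UNIV. (\<lambda>_. \<mu>) (f b))"
    by (rule distr_PiM_reindex) (use P ij in \<open>auto simp: f_def inj_on_def\<close>)
  have "AE x in distr (Pi\<^sub>M I (\<lambda>_. \<mu>)) (\<Pi>\<^sub>M b\<in>UNIV. \<mu>) (\<lambda>\<omega>. \<lambda>b\<in>UNIV. \<omega> (f b)). x True \<noteq> x False"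
    unfolding eqd using AE2 .
  moreover have m2: "(\<lambda>\<omega>. \<lambda>b\<in>UNIV. \<omega> (f b)) \<in> Pi\<^sub>M I (\<lambda>_. \<mu>) \<rightarrow>\<^sub>M Pi\<^sub>M UNIV (\<lambda>_. \<mu>)"
      using ij by (intro measurable_restrict) (auto simp: f_def)
  ultimately have "AE \<omega> in Pi\<^sub>M I (\<lambda>_. \<mu>). \<omega> (f True) \<noteq> \<omega> (f False)"
    using AE_distrD[OF m2, of "\<lambda>x. x True \<noteq> x False"] by simp
  then show ?thesis by (simp add: f_def)
qed

lemma sort_exists:
  fixes s :: "nat \<Rightarrow> real" and n :: nat
  assumes inj: "inj_on s {1..n}"
  shows "\<exists>z. bij_betw z {1..n} {1..n} \<and> (\<forall>i\<in>{1..n}. \<forall>j\<in>{1..n}. i < j \<longrightarrow> s (z i) \<ge> s (z j))"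
proof -
  let ?A = "{1..n::nat}"
  define rk where "rk k = card {l\<in>?A. s k \<le> s l}" for k
  have rkA: "rk k \<in> ?A" if "k \<in> ?A" for k
  proof -
    have "card {l\<in>?A. s k \<le> s l} \<le> card ?A" by (intro card_mono) auto
    moreover have "0 < card {l\<in>?A. s k \<le> s l}"
    proof -
      have "k \<in> {l\<in>?A. s k \<le> s l}" using that by simp
      then have "{l\<in>?A. s k \<le> s l} \<noteq> {}" by blast
      then show ?thesis by (simp only: card_gt_0_iff) simp
    qed
    ultimately show ?thesis by (simp add: rk_def)
  qed
  have mono: "rk b < rk a" if "a \<in> ?A" "b \<in> ?A" "s a < s b" for a b
  proof -
    have "{l\<in>?A. s b \<le> s l} \<subseteq> {l\<in>?A. s a \<le> s l}" using that by auto
    moreover have "a \<in> {l\<in>?A. s a \<le> s l} - {l\<in>?A. s b \<le> s l}" using that by auto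
    ultimately have "{l\<in>?A. s b \<le> s l} \<subset> {l\<in>?A. s a \<le> s l}" by blast
    then show ?thesis unfolding rk_def by (intro psubset_card_mono) auto
  qed
  have inj_rk: "inj_on rk ?A"
  proof (rule inj_onI)
    fix a b assume ab: "a \<in> ?A" "b \<in> ?A" "rk a = rk b"
    show "a = b"
    proof (rule ccontr)
      assume "a \<noteq> b"
      then have "s a \<noteq> s b" using inj ab by (meson inj_on_contraD)
      then have "s a < s b \<or> s b < s a" by linarith
      then show False using mono[of a b] mono[of b a] ab by auto
    qed
  qed
  have "rk ` ?A \<subseteq> ?A" using rkA by auto
  then have bij: "bij_betw rk ?A ?A" unfolding bij_betw_def using inj_rk endo_inj_surj[of ?A rk] by auto
  define z where "z = the_inv_into ?A rk"
  have bz: "bij_betw z ?A ?A" using bij_betw_the_inv_into[OF bij] z_def by simp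
  have rz: "rk (z i) = i" if "i \<in> ?A" for i using f_the_inv_into_f_bij_betw[OF bij] that z_def by simp
  show ?thesis
  proof (intro exI conjI ballI impI)
    show "bij_betw z ?A ?A" by (rule bz)
    fix i j assume ij: "i \<in> ?A" "j \<in> ?A" "i < j"
    show "s (z j) \<le> s (z i)"
    proof (rule ccontr)
      assume "\<not> s (z j) \<le> s (z i)"
      then have "s (z i) < s (z j)" by simp
      moreover have "z i \<in> ?A" "z j \<in> ?A" using bz ij by (auto dest: bij_betwE)
      ultimately have "rk (z j) < rk (z i)" using mono by blast
      then show False using rz ij by simp
    qed
  qed
qed

lemma sort_props:
  fixes s :: "nat \<Rightarrow> real" and n :: nat
  assumes inj: "inj_on s {1..n}"
  shows "bij_betw (sort_perm n s) {1..n} {1..n}"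
    and "\<And>i. i \<in> {1..n} \<Longrightarrow> card {k\<in>{1..n}. s (sort_perm n s i) \<le> s k} = i"
proof -
  let ?A = "{1..n::nat}"
  let ?z = "sort_perm n s"
  have P: "bij_betw ?z ?A ?A \<and> (\<forall>i\<in>?A. \<forall>j\<in>?A. i < j \<longrightarrow> s (?z i) \<ge> s (?z j))"
    unfolding sort_perm_def by (rule someI_ex[OF sort_exists[OF inj]])
  then show bz: "bij_betw ?z ?A ?A" by blast
  fix i assume i: "i \<in> ?A"
  have "{k\<in>?A. s (?z i) \<le> s k} = ?z ` {1..i}"
  proof
    show "?z ` {1..i} \<subseteq> {k\<in>?A. s (?z i) \<le> s k}"
    proof
      fix k assume "k \<in> ?z ` {1..i}"
      then obtain m where m: "m \<in> {1..i}" "k = ?z m" by auto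
      have mA: "m \<in> ?A" using m i by auto
      have "k \<in> ?A" using bz mA m by (auto dest: bij_betwE)
      moreover have "s (?z i) \<le> s k"
      proof (cases "m = i")
        case True then show ?thesis using m by simp
      next
        case False then have "m < i" using m by simp
        then show ?thesis using P mA i m by blast
      qed
      ultimately show "k \<in> {k\<in>?A. s (?z i) \<le> s k}" by simp
    qed
  next
    show "{k\<in>?A. s (?z i) \<le> s k} \<subseteq> ?z ` {1..i}"
    proof
      fix k assume k: "k \<in> {k\<in>?A. s (?z i) \<le> s k}"
      then have "k \<in> ?z ` ?A" using bz by (simp add: bij_betw_def)
      then obtain m where m: "m \<in> ?A" "k = ?z m" by auto
      have "m \<le> i"
      proof (rule ccontr)
        assume "\<not> m \<le> i"
        then have "i < m" by simp
        then have le: "s (?z m) \<le> s (?z i)" using P m i by blast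
        have "?z m \<noteq> ?z i" using bz m i \<open>i < m\<close> unfolding bij_betw_def by (metis inj_on_contraD less_irrefl)
        moreover have "?z m \<in> ?A" "?z i \<in> ?A" using bz m i by (auto dest: bij_betwE)
        ultimately have "s (?z m) \<noteq> s (?z i)" using inj by (meson inj_on_contraD)
        then show False using le k m by simp
      qed
      then show "k \<in> ?z ` {1..i}" using m by auto
    qed
  qed
  moreover have "inj_on ?z {1..i}"
    using bz i unfolding bij_betw_def by (auto intro: inj_on_subset)
  ultimately show "card {k\<in>?A. s (?z i) \<le> s k} = i" by (simp add: card_image)
qed

lemma row_max:
  fixes s :: "nat \<Rightarrow> real" and n :: nat
  assumes inj: "inj_on s {1..n}" and i: "i \<in> {1..n}" and j: "j \<in> {1..n}" and ne: "j \<noteq> sort_perm n s i"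
  shows "FF n s i j < FF n s i (sort_perm n s i)"
proof -
  have zi: "sort_perm n s i \<in> {1..n}" using sort_props(1)[OF inj] i by (auto dest: bij_betwE)
  have "s j \<noteq> s (sort_perm n s i)" using inj zi j ne by (meson inj_on_contraD)
  then show ?thesis using key_ineq[OF zi j _ sort_props(2)[OF inj i]] by simp
qed

lemma exp_lim0:
  fixes c :: real assumes "c < 0"
  shows "((\<lambda>\<tau>. exp (c / \<tau>)) \<longlongrightarrow> 0) (at_right 0)"
proof -
  have "filterlim (\<lambda>\<tau>::real. c * inverse \<tau>) at_bot (at_right 0)"
    by (rule filterlim_tendsto_neg_mult_at_bot[OF tendsto_const assms filterlim_inverse_at_top_right])
  then have "filterlim (\<lambda>\<tau>::real. c / \<tau>) at_bot (at_right 0)" by (simp add: divide_inverse)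
  from filterlim_compose[OF exp_at_bot this] show ?thesis by simp
qed

lemma Phat_eq:
  assumes "n \<ge> 1"
  shows "Phat n s \<tau> i j = exp (FF n s i j / \<tau>) / (\<Sum>l\<in>{1..n}. exp (FF n s i l / \<tau>))"
  by (simp add: Phat_def softmax_def soft_arg_FF)

lemma Phat_shift:
  assumes "\<tau> > 0"
  shows "Phat n s \<tau> i j = exp ((FF n s i j - FF n s i p) / \<tau>) / (\<Sum>l\<in>{1..n}. exp ((FF n s i l - FF n s i p) / \<tau>))"
proof -
  let ?E = "exp (FF n s i p / \<tau>)"
  have e: "exp ((FF n s i l - FF n s i p) / \<tau>) = exp (FF n s i l / \<tau>) / ?E" for l
    by (simp add: diff_divide_distrib exp_diff)
  have "(\<Sum>l\<in>{1..n}. exp ((FF n s i l - FF n s i p) / \<tau>)) = (\<Sum>l\<in>{1..n}. exp (FF n s i l / \<tau>)) / ?E"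
    by (simp add: e sum_divide_distrib)
  then show ?thesis by (simp add: e Phat_def softmax_def soft_arg_FF)
qed

lemma limit_part:
  fixes s :: "nat \<Rightarrow> real" and n :: nat
  assumes inj: "inj_on s {1..n}" and i: "i \<in> {1..n}" and j: "j \<in> {1..n}"
  shows "((\<lambda>\<tau>. Phat n s \<tau> i j) \<longlongrightarrow> perm_mat (sort_perm n s) i j) (at_right 0)"
proof -
  let ?p = "sort_perm n s i"
  have pA: "?p \<in> {1..n}" using sort_props(1)[OF inj] i by (auto dest: bij_betwE)
  let ?g = "\<lambda>l. FF n s i l - FF n s i ?p"
  have lim: "((\<lambda>\<tau>. exp (?g l / \<tau>)) \<longlongrightarrow> (if l = ?p then 1 else 0)) (at_right 0)" if "l \<in> {1..n}" for l
  proof (cases "l = ?p")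
    case True then show ?thesis by simp
  next
    case False
    then have "?g l < 0" using row_max[OF inj i that] by simp
    then show ?thesis using exp_lim0 False by simp
  qed
  have den: "((\<lambda>\<tau>. \<Sum>l\<in>{1..n}. exp (?g l / \<tau>)) \<longlongrightarrow> (\<Sum>l\<in>{1..n}. if l = ?p then 1 else 0)) (at_right 0)"
    by (rule tendsto_sum) (use lim in auto)
  have den1: "(\<Sum>l\<in>{1..n}. (if l = ?p then 1 else 0::real)) = 1" using pA by simp
  have "((\<lambda>\<tau>. exp (?g j / \<tau>) / (\<Sum>l\<in>{1..n}. exp (?g l / \<tau>))) \<longlongrightarrow> (if j = ?p then 1 else 0) / 1) (at_right 0)"
    by (rule tendsto_divide) (use lim[OF j] den den1 in auto)
  moreover have "eventually (\<lambda>\<tau>. exp (?g j / \<tau>) / (\<Sum>l\<in>{1..n}. exp (?g l / \<tau>)) = Phat n s \<tau> i j) (at_right 0)"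
  proof -
    have "eventually (\<lambda>\<tau>::real. \<tau> > 0) (at_right 0)" by (simp add: eventually_at_filter)
    then show ?thesis by eventually_elim (simp add: Phat_shift[where p = ?p])
  qed
  ultimately show ?thesis
    by (simp add: perm_mat_def tendsto_cong)
qed

theorem theorem1:
  fixes n :: nat
  assumes "n \<ge> 1"
  shows "(\<forall>(s :: nat \<Rightarrow> real) (\<tau> :: real). inj_on s {1..n} \<longrightarrow> \<tau> > 0 \<longrightarrow>
            unimodal_row_stochastic n (Phat n s \<tau>) \<and>
            (\<forall>i\<in>{1..n}. row_argmax n (Phat n s \<tau>) i = sort_perm n s i))
       \<and>
         (\<forall>\<mu> :: real measure. prob_space \<mu> \<longrightarrow> sets \<mu> = sets borel \<longrightarrow>
            absolutely_continuous lborel \<mu> \<longrightarrow>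
            (AE s in PiM {1..n} (\<lambda>_. \<mu>).
               \<forall>i\<in>{1..n}. \<forall>j\<in>{1..n}.
                 ((\<lambda>\<tau>. Phat n s \<tau> i j) \<longlongrightarrow> perm_mat (sort_perm n s) i j) (at_right 0)))"
proof (intro conjI allI impI)
  let ?A = "{1..n}"
  fix s :: "nat \<Rightarrow> real" and \<tau> :: real
  assume inj: "inj_on s ?A" and tp: "\<tau> > 0"
  let ?z = "sort_perm n s"
  let ?U = "Phat n s \<tau>"
  have bz: "bij_betw ?z ?A ?A" by (rule sort_props(1)[OF inj])
  define S where "S i = (\<Sum>l\<in>?A. exp (FF n s i l / \<tau>))" for i
  have Spos: "S i > 0" for i
    unfolding S_def using assms by (intro sum_pos) auto
  have U: "?U i j = exp (FF n s i j / \<tau>) / S i" for i j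
    by (simp add: Phat_eq[OF assms] S_def)
  have am: "is_row_argmax n ?U i (?z i)" if i: "i \<in> ?A" for i
    unfolding is_row_argmax_def
  proof (intro conjI ballI impI)
    show "?z i \<in> ?A" using bz i by (auto dest: bij_betwE)
    fix k assume k: "k \<in> ?A" "k \<noteq> ?z i"
    have "FF n s i k < FF n s i (?z i)" by (rule row_max[OF inj i k])
    then have "FF n s i k / \<tau> < FF n s i (?z i) / \<tau>" using tp by (simp add: divide_strict_right_mono)
    then show "?U i k < ?U i (?z i)" unfolding U using Spos[of i] by (simp add: divide_strict_right_mono)
  qed
  have ra: "row_argmax n ?U i = ?z i" if i: "i \<in> ?A" for i
    unfolding row_argmax_def
  proof (rule the_equality)
    show "is_row_argmax n ?U i (?z i)" by (rule am[OF i])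
    fix j assume j: "is_row_argmax n ?U i j"
    show "j = ?z i"
    proof (rule ccontr)
      assume ne: "j \<noteq> ?z i"
      have "?U i (?z i) < ?U i j" using j ne am[OF i] unfolding is_row_argmax_def by auto
      moreover have "?U i j < ?U i (?z i)" using j ne am[OF i] unfolding is_row_argmax_def by auto
      ultimately show False by simp
    qed
  qed
  show "\<forall>i\<in>?A. row_argmax n ?U i = ?z i" using ra by blast
  show "unimodal_row_stochastic n ?U"
    unfolding unimodal_row_stochastic_def
  proof (intro conjI ballI)
    fix i j show "0 \<le> ?U i j" unfolding U using Spos[of i] by simp
  next
    fix i
    have "(\<Sum>j\<in>?A. ?U i j) = (\<Sum>j\<in>?A. exp (FF n s i j / \<tau>)) / S i"
      unfolding U by (simp add: sum_divide_distrib)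
    then show "(\<Sum>j\<in>?A. ?U i j) = 1" using Spos[of i] by (simp add: S_def)
  next
    fix i assume "i \<in> ?A"
    then show "\<exists>j. is_row_argmax n ?U i j" using am by blast
  next
    show "bij_betw (row_argmax n ?U) ?A ?A"
    proof -
      have "bij_betw (row_argmax n ?U) ?A ?A = bij_betw ?z ?A ?A"
        by (rule bij_betw_cong) (simp add: ra)
      then show ?thesis using bz by simp
    qed
  qed
next
  let ?A = "{1..n}"
  fix \<mu> :: "real measure"
  assume P: "prob_space \<mu>" and S: "sets \<mu> = sets borel" and AC: "absolutely_continuous lborel \<mu>"
  let ?D = "{(i, j). i \<in> ?A \<and> j \<in> ?A \<and> i \<noteq> j}"
  have fin: "finite ?D" by (rule finite_subset[of _ "?A \<times> ?A"]) auto
  have "AE s in PiM ?A (\<lambda>_. \<mu>). \<forall>ij\<in>?D. s (fst ij) \<noteq> s (snd ij)"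
  proof (rule AE_finite_allI[OF fin])
    fix ij assume "ij \<in> ?D"
    then have "fst ij \<in> ?A" "snd ij \<in> ?A" "fst ij \<noteq> snd ij" by auto
    then show "AE s in PiM ?A (\<lambda>_. \<mu>). s (fst ij) \<noteq> s (snd ij)"
      by (rule AE_neq[OF P S AC])
  qed
  then show "AE s in PiM ?A (\<lambda>_. \<mu>). \<forall>i\<in>?A. \<forall>j\<in>?A.
                 ((\<lambda>\<tau>. Phat n s \<tau> i j) \<longlongrightarrow> perm_mat (sort_perm n s) i j) (at_right 0)"
  proof (rule eventually_mono)
    fix s :: "nat \<Rightarrow> real"
    assume h: "\<forall>ij\<in>?D. s (fst ij) \<noteq> s (snd ij)"
    have inj: "inj_on s ?A"
    proof (rule inj_onI)
      fix a b assume "a \<in> ?A" "b \<in> ?A" "s a = s b"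
      then show "a = b" using h[rule_format, of "(a, b)"] by auto
    qed
    show "\<forall>i\<in>?A. \<forall>j\<in>?A. ((\<lambda>\<tau>. Phat n s \<tau> i j) \<longlongrightarrow> perm_mat (sort_perm n s) i j) (at_right 0)"
      using limit_part[OF inj] by blast
  qed
qed

end
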